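(* Let $m,n,L\ge 2$ be integers. If $\beta=(\pi_\ell)_{\ell=1}^L$, $\pi_\ell=(a_\ell,b_\ell,c_\ell,d_\ell)$, is a chainable architecture such that $\mathcal{B}^\beta$ consists of $m\times n$ matrices and contains at least one matrix all of whose entries are nonzero, then there exist positive integers $q_1,\dots,q_L$ with $m=\prod_{\ell=1}^Lq_\ell$, $p_1,\dots,p_L$ with $n=\prod_{\ell=1}^Lp_\ell$, and $r_1,\dots,r_{L-1}$ such that, with the convention $r_0=r_L=1$, for each $1\le\ell\le L$: $$a_\ell=\prod_{j=1}^{\ell-1}p_j,\quad d_\ell=\prod_{j=\ell+1}^Lq_j,\quad b_\ell=q_\ell r_{\ell-1},\quad c_\ell=p_\ell r_\ell.$$ Conversely, any architecture defined by these formulas from positive integers $p_\ell,q_\ell,r_\ell$ with $n=\prod_\ell p_\ell$ and $m=\prod_\ell q_\ell$ is chainable and $\mathcal{B}^\beta\subseteq\mathbb{R}^{m\times n}$ (real matrices) contains at least one matrix with all entries nonzero. Such an architecture is non-redundant if and only if $r_1<q_1$, $r_{L-1}<p_L$, and $\frac{1}{p_\ell}<\frac{r_\ell}{r_{\ell-1}}<q_\ell$ for all $2\le\ell\le L-1$.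
   Context: A pattern is a tuple $\pi=(a,b,c,d)$ of positive integers; $\mathbf{S}_\pi:=\mathbf{I}_a\otimes\mathbf{1}_{b\times c}\otimes\mathbf{I}_d\in\{0,1\}^{abd\times acd}$. A $\pi$-factor is a matrix of size $abd\times acd$ with support contained in that of $\mathbf{S}_\pi$. Patterns $\pi=(a,b,c,d),\pi'=(a',b',c',d')$ are chainable if $ac/a'=b'd'/d=:r(\pi,\pi')$ is an integer, $a\mid a'$, $d'\mid d$; a chainable pair is redundant if $r(\pi,\pi')\ge\min(b,c')$. An architecture $\beta=(\pi_\ell)_{\ell=1}^L$ is a sequence of patterns with $a_\ell c_\ell d_\ell=a_{\ell+1}b_{\ell+1}d_{\ell+1}$; it is chainable if every consecutive pair is chainable, and (if chainable) redundant if some consecutive pair is redundant. $\mathcal{B}^\beta:=\{\mathbf{X}_1\cdots\mathbf{X}_L:\mathbf{X}_\ell\text{ a }\pi_\ell\text{-factor}\}$. *)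

theory Defs
  imports "Jordan_Normal_Form.Matrix"
begin

type_synonym pattern = "nat \<times> nat \<times> nat \<times> nat"

definition pa :: "pattern \<Rightarrow> nat" where "pa \<pi> = fst \<pi>"
definition pb :: "pattern \<Rightarrow> nat" where "pb \<pi> = fst (snd \<pi>)"
definition pc :: "pattern \<Rightarrow> nat" where "pc \<pi> = fst (snd (snd \<pi>))"
definition pd :: "pattern \<Rightarrow> nat" where "pd \<pi> = snd (snd (snd \<pi>))"

definition kron :: "'a::semiring_1 mat \<Rightarrow> 'a mat \<Rightarrow> 'a mat" where
  "kron A B = mat (dim_row A * dim_row B) (dim_col A * dim_col B)
     (\<lambda>(i,j). A $$ (i div dim_row B, j div dim_col B) * B $$ (i mod dim_row B, j mod dim_col B))"

definition ones_mat :: "nat \<Rightarrow> nat \<Rightarrow> 'a::semiring_1 mat" where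
  "ones_mat b c = mat b c (\<lambda>_. 1)"

definition S_pat :: "pattern \<Rightarrow> real mat" where
  "S_pat \<pi> = kron (kron (1\<^sub>m (pa \<pi>)) (ones_mat (pb \<pi>) (pc \<pi>))) (1\<^sub>m (pd \<pi>))"

definition is_factor :: "pattern \<Rightarrow> real mat \<Rightarrow> bool" where
  "is_factor \<pi> X \<longleftrightarrow>
     X \<in> carrier_mat (pa \<pi> * pb \<pi> * pd \<pi>) (pa \<pi> * pc \<pi> * pd \<pi>) \<and>
     (\<forall>i < pa \<pi> * pb \<pi> * pd \<pi>. \<forall>j < pa \<pi> * pc \<pi> * pd \<pi>.
        S_pat \<pi> $$ (i,j) = 0 \<longrightarrow> X $$ (i,j) = 0)"

fun mprod :: "real mat list \<Rightarrow> real mat" where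
  "mprod [] = 1\<^sub>m 0"
| "mprod [X] = X"
| "mprod (X # Xs) = X * mprod Xs"

definition B_set :: "pattern list \<Rightarrow> real mat set" where
  "B_set \<beta> = {mprod Xs | Xs. length Xs = length \<beta> \<and>
                 (\<forall>l < length \<beta>. is_factor (\<beta> ! l) (Xs ! l))}"

definition pattern_ok :: "pattern \<Rightarrow> bool" where
  "pattern_ok \<pi> \<longleftrightarrow> pa \<pi> > 0 \<and> pb \<pi> > 0 \<and> pc \<pi> > 0 \<and> pd \<pi> > 0"

definition is_arch :: "pattern list \<Rightarrow> bool" where
  "is_arch \<beta> \<longleftrightarrow> (\<forall>\<pi> \<in> set \<beta>. pattern_ok \<pi>) \<and>
     (\<forall>l. Suc l < length \<beta> \<longrightarrow>
        pa (\<beta>!l) * pc (\<beta>!l) * pd (\<beta>!l) = pa (\<beta>!Suc l) * pb (\<beta>!Suc l) * pd (\<beta>!Suc l))"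

definition chainable_pair :: "pattern \<Rightarrow> pattern \<Rightarrow> bool" where
  "chainable_pair \<pi> \<pi>' \<longleftrightarrow>
     pa \<pi>' dvd pa \<pi> * pc \<pi> \<and> pd \<pi> dvd pb \<pi>' * pd \<pi>' \<and>
     pa \<pi> * pc \<pi> div pa \<pi>' = pb \<pi>' * pd \<pi>' div pd \<pi> \<and>
     pa \<pi> dvd pa \<pi>' \<and> pd \<pi>' dvd pd \<pi>"

definition r_pair :: "pattern \<Rightarrow> pattern \<Rightarrow> nat" where
  "r_pair \<pi> \<pi>' = pa \<pi> * pc \<pi> div pa \<pi>'"

definition redundant_pair :: "pattern \<Rightarrow> pattern \<Rightarrow> bool" where
  "redundant_pair \<pi> \<pi>' \<longleftrightarrow> chainable_pair \<pi> \<pi>' \<and> r_pair \<pi> \<pi>' \<ge> min (pb \<pi>) (pc \<pi>')"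

definition chainable_arch :: "pattern list \<Rightarrow> bool" where
  "chainable_arch \<beta> \<longleftrightarrow> is_arch \<beta> \<and>
     (\<forall>l. Suc l < length \<beta> \<longrightarrow> chainable_pair (\<beta>!l) (\<beta>!Suc l))"

definition redundant_arch :: "pattern list \<Rightarrow> bool" where
  "redundant_arch \<beta> \<longleftrightarrow> chainable_arch \<beta> \<and>
     (\<exists>l. Suc l < length \<beta> \<and> redundant_pair (\<beta>!l) (\<beta>!Suc l))"

definition all_nonzero :: "real mat \<Rightarrow> bool" where
  "all_nonzero M \<longleftrightarrow> (\<forall>i < dim_row M. \<forall>j < dim_col M. M $$ (i,j) \<noteq> 0)"

text \<open>The architecture built from p,q,r (1-indexed, r 0 = r L = 1):
  pattern l = (prod_{j<l} p_j, q_l r_{l-1}, p_l r_l, prod_{j>l} q_j), l = 1..L.\<close>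
definition arch_of :: "nat \<Rightarrow> (nat \<Rightarrow> nat) \<Rightarrow> (nat \<Rightarrow> nat) \<Rightarrow> (nat \<Rightarrow> nat) \<Rightarrow> pattern list" where
  "arch_of L p q r = map (\<lambda>l. (\<Prod>j\<in>{1..<l}. p j, q l * r (l - 1), p l * r l, \<Prod>j\<in>{l+1..L}. q j)) [1..<L+1]"

end

theory Submission
  imports Defs
begin


definition rw :: "pattern \<Rightarrow> nat" where "rw \<pi> = pa \<pi> * pb \<pi> * pd \<pi>"
definition cl :: "pattern \<Rightarrow> nat" where "cl \<pi> = pa \<pi> * pc \<pi> * pd \<pi>"

lemma S_pat_dim: "S_pat \<pi> \<in> carrier_mat (rw \<pi>) (cl \<pi>)"
  unfolding S_pat_def kron_def rw_def cl_def ones_mat_def by (simp add: ac_simps)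

lemma S_pat_entry:
  assumes "i < rw \<pi>" "j < cl \<pi>"
  shows "S_pat \<pi> $$ (i,j) = (if i div (pb \<pi> * pd \<pi>) = j div (pc \<pi> * pd \<pi>) \<and> i mod pd \<pi> = j mod pd \<pi> then 1 else 0)"
proof -
  obtain a b c d where p: "\<pi> = (a,b,c,d)" by (cases \<pi>) auto
  have ab: "pa \<pi> = a" "pb \<pi> = b" "pc \<pi> = c" "pd \<pi> = d" unfolding p pa_def pb_def pc_def pd_def by auto
  have i: "i < a*b*d" and j: "j < a*c*d" using assms unfolding rw_def cl_def ab by auto
  have d0: "d > 0" using i by (cases "d = 0") auto
  have b0: "b > 0" using i by (cases "b = 0") auto
  have c0: "c > 0" using j by (cases "c = 0") auto
  have i1: "i div d < a * b" using i d0 by (simp add: div_less_iff_less_mult ac_simps)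
  have j1: "j div d < a * c" using j d0 by (simp add: div_less_iff_less_mult ac_simps)
  have i2: "i div d div b < a" using i1 b0 by (simp add: div_less_iff_less_mult ac_simps)
  have j2: "j div d div c < a" using j1 c0 by (simp add: div_less_iff_less_mult ac_simps)
  have "S_pat \<pi> $$ (i,j) = (if i div d div b = j div d div c then 1 else 0) * (if i mod d = j mod d then 1 else 0)"
    unfolding S_pat_def kron_def ab ones_mat_def using i j i1 j1 i2 j2 d0 b0 c0
    by (simp add: ac_simps)
  also have "\<dots> = (if i div (b * d) = j div (c * d) \<and> i mod d = j mod d then 1 else 0)"
  proof -
    have "i div (b*d) = i div d div b" "j div (c*d) = j div d div c"
      by (metis div_mult2_eq mult.commute)+
    then show ?thesis by simp
  qed
  finally show ?thesis unfolding ab .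
qed

lemma factor_supp:
  assumes "is_factor \<pi> X" "i < rw \<pi>" "j < cl \<pi>" "X $$ (i,j) \<noteq> 0"
  shows "i div (pb \<pi> * pd \<pi>) = j div (pc \<pi> * pd \<pi>) \<and> i mod pd \<pi> = j mod pd \<pi>"
proof -
  have "S_pat \<pi> $$ (i,j) \<noteq> 0" using assms unfolding is_factor_def rw_def cl_def by auto
  then show ?thesis using S_pat_entry[OF assms(2,3)] by (auto split: if_splits)
qed

lemma factor_carrier: "is_factor \<pi> X \<Longrightarrow> X \<in> carrier_mat (rw \<pi>) (cl \<pi>)"
  unfolding is_factor_def rw_def cl_def by auto

lemma mult_nz:
  assumes "A \<in> carrier_mat r k" "B \<in> carrier_mat k c" "i < r" "j < c" "(A*B) $$ (i,j) \<noteq> 0"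
  shows "\<exists>t<k. A $$ (i,t) \<noteq> 0 \<and> B $$ (t,j) \<noteq> 0"
proof (rule ccontr)
  assume n: "\<not> ?thesis"
  have "(A*B) $$ (i,j) = (\<Sum>t\<in>{0..<k}. A $$ (i,t) * B $$ (t,j))"
    using assms by (simp add: scalar_prod_def)
  also have "\<dots> = 0" using n by (intro sum.neutral) auto
  finally show False using assms(5) by simp
qed

lemma mult_entry:
  assumes "A \<in> carrier_mat r k" "B \<in> carrier_mat k c" "i < r" "j < c"
  shows "(A*B) $$ (i,j) = (\<Sum>t\<in>{0..<k}. A $$ (i,t) * B $$ (t,j))"
  using assms by (simp add: scalar_prod_def)

lemma chain_tail: "chainable_arch (\<pi> # \<beta>) \<Longrightarrow> chainable_arch \<beta>"
  unfolding chainable_arch_def is_arch_def by fastforce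

lemma chain_dvd:
  assumes "chainable_arch \<beta>" "i \<le> k" "k < length \<beta>"
  shows "pa (\<beta>!i) dvd pa (\<beta>!k) \<and> pd (\<beta>!k) dvd pd (\<beta>!i)"
  using assms(2,3)
proof (induction k)
  case 0 then show ?case by simp
next
  case (Suc k)
  show ?case
  proof (cases "i = Suc k")
    case True then show ?thesis by simp
  next
    case False
    then have "i \<le> k" using Suc by simp
    with Suc have ih: "pa (\<beta>!i) dvd pa (\<beta>!k) \<and> pd (\<beta>!k) dvd pd (\<beta>!i)" by simp
    have "chainable_pair (\<beta>!k) (\<beta>!Suc k)" using assms(1) Suc(3) unfolding chainable_arch_def by simp
    then have "pa (\<beta>!k) dvd pa (\<beta>!Suc k) \<and> pd (\<beta>!Suc k) dvd pd (\<beta>!k)" unfolding chainable_pair_def by simp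
    with ih show ?thesis using dvd_trans by blast
  qed
qed

lemma div_calc:
  assumes "k dvd (a::nat)" "a > 0" "i div (b*d) = j div (c*d)"
  shows "i div (a*b*d div k) = j div (a*c*d div k)"
proof -
  obtain e where a: "a = k*e" using assms(1) by blast
  have k: "k > 0" using a assms(2) by (cases k) auto
  have 1: "a*b*d div k = (b*d)*e" "a*c*d div k = (c*d)*e" using k unfolding a by (simp_all add: ac_simps)
  have "i div ((b*d)*e) = i div (b*d) div e" "j div ((c*d)*e) = j div (c*d) div e" by (rule div_mult2_eq)+
  then show ?thesis unfolding 1 using assms(3) by simp
qed

lemma pos_of_arch: "chainable_arch \<beta> \<Longrightarrow> k < length \<beta> \<Longrightarrow> pa (\<beta>!k) > 0 \<and> pb (\<beta>!k) > 0 \<and> pc (\<beta>!k) > 0 \<and> pd (\<beta>!k) > 0"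
  unfolding chainable_arch_def is_arch_def pattern_ok_def using nth_mem by blast



lemma prod_props:
  assumes "chainable_arch \<beta>" "\<beta> \<noteq> []" "length Xs = length \<beta>" "\<forall>l<length \<beta>. is_factor (\<beta>!l) (Xs!l)"
  shows "mprod Xs \<in> carrier_mat (rw (hd \<beta>)) (cl (last \<beta>)) \<and>
    (\<forall>i<rw (hd \<beta>). \<forall>j<cl (last \<beta>). mprod Xs $$ (i,j) \<noteq> 0 \<longrightarrow>
       i mod pd (last \<beta>) = j mod pd (last \<beta>) \<and>
       (\<forall>k. k dvd pa (hd \<beta>) \<longrightarrow> i div (rw (hd \<beta>) div k) = j div (cl (last \<beta>) div k)))"
  using assms
proof (induction \<beta> arbitrary: Xs)
  case Nil then show ?case by simp
next
  case (Cons \<pi> \<beta>')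
  have pos\<pi>: "pa \<pi> > 0" using pos_of_arch[OF Cons.prems(1), of 0] by simp
  show ?case
  proof (cases "\<beta>' = []")
    case True
    then obtain X where Xs: "Xs = [X]" using Cons.prems(3) by (cases Xs) auto
    have f: "is_factor \<pi> X" using Cons.prems(4) Xs by auto
    have "X \<in> carrier_mat (rw \<pi>) (cl \<pi>)" using factor_carrier[OF f] .
    moreover have "i mod pd \<pi> = j mod pd \<pi> \<and> (\<forall>k. k dvd pa \<pi> \<longrightarrow> i div (rw \<pi> div k) = j div (cl \<pi> div k))"
      if "i < rw \<pi>" "j < cl \<pi>" "X $$ (i,j) \<noteq> 0" for i j
    proof -
      have s: "i div (pb \<pi> * pd \<pi>) = j div (pc \<pi> * pd \<pi>) \<and> i mod pd \<pi> = j mod pd \<pi>"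
        using factor_supp[OF f that] .
      show ?thesis using s div_calc[OF _ pos\<pi>, of _ i "pb \<pi>" "pd \<pi>" j "pc \<pi>"] unfolding rw_def cl_def by blast
    qed
    ultimately show ?thesis unfolding Xs True by simp
  next
    case False
    then obtain X Y Ys where Xs: "Xs = X # Y # Ys" using Cons.prems(3)
      by (cases Xs; cases "tl Xs") auto
    have f: "is_factor \<pi> X" using Cons.prems(4) Xs by auto
    have ch': "chainable_arch \<beta>'" using chain_tail Cons.prems(1) by blast
    note IH = Cons.IH[OF ch' False, of "Y # Ys"]
    have len: "length (Y#Ys) = length \<beta>'" using Cons.prems(3) Xs by simp
    have fac: "\<forall>l<length \<beta>'. is_factor (\<beta>'!l) ((Y#Ys)!l)" using Cons.prems(4) Xs by auto
    have hd': "hd \<beta>' = (\<pi>#\<beta>')!1" using False by (cases \<beta>') auto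
    have last': "last \<beta>' = (\<pi>#\<beta>')!(length \<beta>')" using False by (simp add: last_conv_nth)
    have lenpos: "length \<beta>' > 0" using False by simp
    have l0: "Suc 0 < length (\<pi>#\<beta>')" using lenpos by simp
    have eq0: "cl ((\<pi>#\<beta>')!0) = rw ((\<pi>#\<beta>')!Suc 0)" using Cons.prems(1) l0 unfolding chainable_arch_def is_arch_def rw_def cl_def
      by blast
    have eq: "cl \<pi> = rw (hd \<beta>')" using eq0 hd' by simp
    have cp0: "chainable_pair ((\<pi>#\<beta>')!0) ((\<pi>#\<beta>')!Suc 0)" using Cons.prems(1) l0 unfolding chainable_arch_def
      by blast
    have cp: "chainable_pair \<pi> (hd \<beta>')" using cp0 hd' by simp
    have adv: "pa \<pi> dvd pa (hd \<beta>')" using cp unfolding chainable_pair_def by simp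
    have ddv: "pd (last \<beta>') dvd pd \<pi>" using chain_dvd[OF Cons.prems(1), of 0 "length \<beta>'"] last' by simp
    have Pc: "mprod (Y#Ys) \<in> carrier_mat (rw (hd \<beta>')) (cl (last \<beta>'))" using IH len fac by blast
    have mp: "mprod Xs = X * mprod (Y#Ys)" unfolding Xs by simp
    have Xc: "X \<in> carrier_mat (rw \<pi>) (rw (hd \<beta>'))" using factor_carrier[OF f] eq by simp
    show ?thesis
    proof (intro conjI allI impI)
      show "mprod Xs \<in> carrier_mat (rw (hd (\<pi> # \<beta>'))) (cl (last (\<pi> # \<beta>')))"
        using mp Pc Xc False by simp
    next
      fix i j assume i: "i < rw (hd (\<pi> # \<beta>'))" and j: "j < cl (last (\<pi> # \<beta>'))"
        and nz: "mprod Xs $$ (i, j) \<noteq> 0"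
      have i': "i < rw \<pi>" and j': "j < cl (last \<beta>')" using i j False by auto
      obtain t where t: "t < rw (hd \<beta>')" "X $$ (i,t) \<noteq> 0" "mprod (Y#Ys) $$ (t,j) \<noteq> 0"
        using mult_nz[OF Xc Pc i' j'] nz mp by auto
      have s1: "i div (pb \<pi> * pd \<pi>) = t div (pc \<pi> * pd \<pi>) \<and> i mod pd \<pi> = t mod pd \<pi>"
        using factor_supp[OF f i'] t eq by simp
      have s2: "t mod pd (last \<beta>') = j mod pd (last \<beta>') \<and>
       (\<forall>k. k dvd pa (hd \<beta>') \<longrightarrow> t div (rw (hd \<beta>') div k) = j div (cl (last \<beta>') div k))"
        using IH len fac t j' by blast
      show "i mod pd (last (\<pi> # \<beta>')) = j mod pd (last (\<pi> # \<beta>'))"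
        using s1 s2 False ddv by (metis last_ConsR mod_mod_cancel)
      fix k assume k: "k dvd pa (hd (\<pi> # \<beta>'))"
      have "i div (rw \<pi> div k) = t div (cl \<pi> div k)"
        using div_calc[OF _ pos\<pi>, of k i "pb \<pi>" "pd \<pi>" t "pc \<pi>"] k s1 unfolding rw_def cl_def by simp
      also have "\<dots> = j div (cl (last \<beta>') div k)"
      proof -
        have "k dvd pa (hd \<beta>')" using k adv by (simp add: dvd_trans)
        then show ?thesis using s2 eq by metis
      qed
      finally show "i div (rw (hd (\<pi> # \<beta>')) div k) = j div (cl (last (\<pi> # \<beta>')) div k)"
        using False by simp
    qed
  qed
qed



lemma is_factor_S: "is_factor \<pi> (S_pat \<pi>)"
  unfolding is_factor_def using S_pat_dim[of \<pi>] unfolding rw_def cl_def by auto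

lemma S_nonneg: "i < rw \<pi> \<Longrightarrow> j < cl \<pi> \<Longrightarrow> S_pat \<pi> $$ (i,j) \<ge> 0"
  using S_pat_entry by simp

lemma step_arith:
  fixes a b c d a' b' d' r e K i j :: nat
  assumes "a*c = a'*r" "b'*d' = d*r" "a' = a*e" "r>0" "a>0" "d>0" "K>0"
    "i < a*b*d" "j < a'*K" "i div (b*d) = j div (e*K)"
  defines "t \<equiv> (j div K)*(b'*d') + i mod d"
  shows "t < a'*b'*d' \<and> i div (b*d) = t div (c*d) \<and> i mod d = t mod d \<and> t div (b'*d') = j div K"
proof -
  have c: "c = e*r" using assms(1,3,5) by (simp add: ac_simps)
  have J: "j div K < a'" using assms(9,7) by (simp add: div_less_iff_less_mult ac_simps)
  have md: "i mod d < d*r" using assms(4,6) by (metis mod_less_divisor mult_le_mono2 nat_mult_1_right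
      less_le_trans One_nat_def Suc_leI)
  have aux: "(x * n + m) div n = x" if "m < n" for x n m :: nat
  proof -
    have "n \<noteq> 0" using that by simp
    then have "(m + x * n) div n = x + m div n" by (rule div_mult_self1)
    then show ?thesis using that by (simp add: add.commute)
  qed
  have t1: "t div (b'*d') = j div K" unfolding t_def assms(2) using aux[OF md, of "j div K"] by simp
  have t2: "t mod d = i mod d" unfolding t_def assms(2) by (simp add: ac_simps)
  have "t < (j div K)*(b'*d') + b'*d'" unfolding t_def using md assms(2) by simp
  also have "\<dots> = (Suc (j div K))*(b'*d')" by simp
  also have "\<dots> \<le> a'*(b'*d')" using J by (intro mult_le_mono1) simp
  finally have t3: "t < a'*b'*d'" by (simp add: ac_simps)
  have "t div (c*d) = t div ((b'*d')*e)" using c assms(2) by (simp add: ac_simps)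
  also have "\<dots> = t div (b'*d') div e" by (rule div_mult2_eq)
  also have "\<dots> = j div K div e" using t1 by simp
  also have "\<dots> = j div (K*e)" by (rule div_mult2_eq[symmetric])
  also have "\<dots> = j div (e*K)" by (simp add: ac_simps)
  finally show ?thesis using t1 t2 t3 assms(10) by simp
qed



lemma mprod_map_cons: "\<beta>' \<noteq> [] \<Longrightarrow> mprod (map S_pat (\<pi> # \<beta>')) = S_pat \<pi> * mprod (map S_pat \<beta>')"
  by (cases \<beta>') auto

lemma mprod_S_pos:
  assumes "chainable_arch \<beta>" "\<beta> \<noteq> []" "pd (last \<beta>) = 1"
  shows "\<forall>i<rw (hd \<beta>). \<forall>j<cl (last \<beta>). mprod (map S_pat \<beta>) $$ (i,j) \<ge> 0 \<and>
     (i div (pb (hd \<beta>) * pd (hd \<beta>)) = j div (cl (last \<beta>) div pa (hd \<beta>)) \<longrightarrow> mprod (map S_pat \<beta>) $$ (i,j) > 0)"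
  using assms
proof (induction \<beta>)
  case Nil then show ?case by simp
next
  case (Cons \<pi> \<beta>')
  have pos: "pa \<pi> > 0 \<and> pb \<pi> > 0 \<and> pc \<pi> > 0 \<and> pd \<pi> > 0" using pos_of_arch[OF Cons.prems(1), of 0] by simp
  show ?case
  proof (cases "\<beta>' = []")
    case True
    have d1: "pd \<pi> = 1" using Cons.prems(3) True by simp
    have cd: "cl \<pi> div pa \<pi> = pc \<pi> * pd \<pi>" using pos unfolding cl_def by simp
    show ?thesis unfolding True using S_pat_entry[of _ \<pi>] d1 cd by simp
  next
    case False
    define \<pi>' where "\<pi>' = hd \<beta>'"
    define C where "C = cl (last \<beta>')"
    have ch': "chainable_arch \<beta>'" using chain_tail Cons.prems(1) by blast
    have IH: "\<forall>i<rw \<pi>'. \<forall>j<C. mprod (map S_pat \<beta>') $$ (i,j) \<ge> 0 \<and>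
     (i div (pb \<pi>' * pd \<pi>') = j div (C div pa \<pi>') \<longrightarrow> mprod (map S_pat \<beta>') $$ (i,j) > 0)"
      using Cons.IH[OF ch' False] Cons.prems(3) False unfolding \<pi>'_def C_def by simp
    have hd': "\<pi>' = (\<pi>#\<beta>')!Suc 0" unfolding \<pi>'_def using False by (cases \<beta>') auto
    have lenpos: "length \<beta>' > 0" using False by simp
    have l0: "Suc 0 < length (\<pi>#\<beta>')" using lenpos by simp
    have eq0: "cl ((\<pi>#\<beta>')!0) = rw ((\<pi>#\<beta>')!Suc 0)" using Cons.prems(1) l0 unfolding chainable_arch_def is_arch_def rw_def cl_def
      by blast
    have eq: "cl \<pi> = rw \<pi>'" using eq0 hd' by simp
    have cp0: "chainable_pair ((\<pi>#\<beta>')!0) ((\<pi>#\<beta>')!Suc 0)" using Cons.prems(1) l0 unfolding chainable_arch_def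
      by blast
    have cp: "chainable_pair \<pi> \<pi>'" using cp0 hd' by simp
    have pos': "pa \<pi>' > 0 \<and> pb \<pi>' > 0 \<and> pc \<pi>' > 0 \<and> pd \<pi>' > 0" using pos_of_arch[OF Cons.prems(1) l0] hd' by simp
    have hd2: "\<pi>' = \<beta>'!0" unfolding \<pi>'_def using False by (simp add: hd_conv_nth)
    have last2: "last \<beta>' = \<beta>'!(length \<beta>' - 1)" using False by (simp add: last_conv_nth)
    have posl: "pa (last \<beta>') > 0 \<and> pc (last \<beta>') > 0 \<and> pd (last \<beta>') > 0"
      using pos_of_arch[OF ch', of "length \<beta>' - 1"] last2 lenpos by simp
    have advL: "pa \<pi>' dvd pa (last \<beta>')" using chain_dvd[OF ch', of 0 "length \<beta>' - 1"] hd2 last2 lenpos by simp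
    have aC: "pa \<pi>' dvd C" unfolding C_def cl_def using advL by simp
    have Cpos: "C > 0" unfolding C_def cl_def using posl by simp
    define a where "a = pa \<pi>"
    define b where "b = pb \<pi>"
    define c where "c = pc \<pi>"
    define d where "d = pd \<pi>"
    define a' where "a' = pa \<pi>'"
    define b' where "b' = pb \<pi>'"
    define d' where "d' = pd \<pi>'"
    define r where "r = a*c div a'"
    define e where "e = a' div a"
    define K where "K = C div a'"
    have h1: "a*c = a'*r" using cp unfolding chainable_pair_def r_def a_def c_def a'_def by (metis dvd_mult_div_cancel)
    have h2: "b'*d' = d*r" using cp unfolding chainable_pair_def r_def a_def c_def a'_def b'_def d'_def d_def
      by (metis dvd_mult_div_cancel)
    have h3: "a' = a*e" using cp unfolding chainable_pair_def e_def a_def a'_def by simp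
    have h4: "r > 0" using h1 pos unfolding a_def c_def by (metis mult_is_0 neq0_conv nat_0_less_mult_iff)
    have h7: "K > 0" using aC Cpos unfolding K_def a'_def by (metis dvd_mult_div_cancel mult_0_right neq0_conv)
    have CK: "C = a'*K" using aC unfolding K_def a'_def by simp
    have CKa: "C div a = e*K" using CK h3 pos unfolding a_def by simp
    have M: "mprod (map S_pat (\<pi>#\<beta>')) = S_pat \<pi> * mprod (map S_pat \<beta>')" using mprod_map_cons[OF False] .
    have Sc: "S_pat \<pi> \<in> carrier_mat (rw \<pi>) (rw \<pi>')" using S_pat_dim[of \<pi>] eq by simp
    have Mc: "mprod (map S_pat \<beta>') \<in> carrier_mat (rw \<pi>') C"
      using prod_props[OF ch' False, of "map S_pat \<beta>'"] is_factor_S unfolding \<pi>'_def C_def by simp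
    show ?thesis
    proof (intro allI impI conjI)
      fix i j assume i: "i < rw (hd (\<pi> # \<beta>'))" and j: "j < cl (last (\<pi> # \<beta>'))"
      have i': "i < rw \<pi>" and j': "j < C" using i j False unfolding C_def by auto
      have E: "mprod (map S_pat (\<pi>#\<beta>')) $$ (i,j) = (\<Sum>t\<in>{0..<rw \<pi>'}. S_pat \<pi> $$ (i,t) * mprod (map S_pat \<beta>') $$ (t,j))"
        unfolding M by (rule mult_entry[OF Sc Mc i' j'])
      have nn: "\<And>t. t \<in> {0..<rw \<pi>'} \<Longrightarrow> S_pat \<pi> $$ (i,t) * mprod (map S_pat \<beta>') $$ (t,j) \<ge> 0"
        using S_nonneg[OF i'] IH j' eq by simp
      show "mprod (map S_pat (\<pi>#\<beta>')) $$ (i,j) \<ge> 0" unfolding E using nn by (rule sum_nonneg)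
      assume cond: "i div (pb (hd (\<pi> # \<beta>')) * pd (hd (\<pi> # \<beta>'))) = j div (cl (last (\<pi> # \<beta>')) div pa (hd (\<pi> # \<beta>')))"
      have cond': "i div (b*d) = j div (e*K)" using cond False CKa unfolding C_def b_def d_def a_def by simp
      define t where "t = (j div K)*(b'*d') + i mod d"
      have st: "t < a'*b'*d' \<and> i div (b*d) = t div (c*d) \<and> i mod d = t mod d \<and> t div (b'*d') = j div K"
        unfolding t_def
        by (rule step_arith[OF h1 h2 h3 h4 _ _ h7 _ _ cond'])
           (use pos i' j' CK in \<open>simp_all add: a_def d_def b_def rw_def\<close>)
      have t: "t < rw \<pi>'" using st unfolding rw_def a'_def b'_def d'_def by simp
      have S1: "S_pat \<pi> $$ (i,t) = 1" using S_pat_entry[OF i', of t] t eq st unfolding b_def c_def d_def by simp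
      have P: "mprod (map S_pat \<beta>') $$ (t,j) > 0" using IH t j' st unfolding K_def b'_def d'_def a'_def by simp
      have "S_pat \<pi> $$ (i,t) * mprod (map S_pat \<beta>') $$ (t,j) \<le> (\<Sum>t\<in>{0..<rw \<pi>'}. S_pat \<pi> $$ (i,t) * mprod (map S_pat \<beta>') $$ (t,j))"
        by (rule member_le_sum) (use t nn in auto)
      then show "mprod (map S_pat (\<pi>#\<beta>')) $$ (i,j) > 0" unfolding E using S1 P by simp
    qed
  qed
qed



lemma arch_len: "length (arch_of L p q r) = L"
  unfolding arch_of_def by simp

lemma arch_nth: "k < L \<Longrightarrow> arch_of L p q r ! k =
  (\<Prod>j\<in>{1..<Suc k}. p j, q (Suc k) * r k, p (Suc k) * r (Suc k), \<Prod>j\<in>{Suc (Suc k)..L}. q j)"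
  unfolding arch_of_def by (simp del: upt_Suc)

lemma pair_arith:
  fixes A p1 q1 r0 r1 q2 p2 r2 D :: nat
  assumes "A > 0" "p1 > 0" "q2 > 0" "D > 0"
  defines "\<pi> \<equiv> (A, q1*r0, p1*r1, q2*D)" and "\<pi>' \<equiv> (A*p1, q2*r1, p2*r2, D)"
  shows "chainable_pair \<pi> \<pi>' \<and> r_pair \<pi> \<pi>' = r1 \<and>
    pa \<pi> * pc \<pi> * pd \<pi> = pa \<pi>' * pb \<pi>' * pd \<pi>' \<and> pb \<pi> = q1*r0 \<and> pc \<pi>' = p2*r2"
  using assms unfolding chainable_pair_def r_pair_def \<pi>_def \<pi>'_def pa_def pb_def pc_def pd_def
  by (simp add: ac_simps)



lemma rat1: "p > 0 \<Longrightarrow> b > 0 \<Longrightarrow> (1 / real p < real a / real b) \<longleftrightarrow> b < p * a"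
proof -
  assume "p > 0" "b > 0"
  then have "(1 / real p < real a / real b) \<longleftrightarrow> real b < real a * real p"
    by (simp add: divide_simps)
  also have "\<dots> \<longleftrightarrow> b < p * a" by (metis of_nat_less_iff of_nat_mult mult.commute)
  finally show ?thesis .
qed

lemma rat2: "b > 0 \<Longrightarrow> (real a / real b < real q) \<longleftrightarrow> a < q * b"
proof -
  assume "b > 0"
  then have "(real a / real b < real q) \<longleftrightarrow> real a < real q * real b"
    by (simp add: divide_simps)
  also have "\<dots> \<longleftrightarrow> a < q * b" by (metis of_nat_less_iff of_nat_mult)
  finally show ?thesis .
qed

lemma red_equiv:
  fixes p q r :: "nat \<Rightarrow> nat"
  assumes L: "L \<ge> 2" and pq: "\<forall>l\<in>{1..L}. p l > 0 \<and> q l > 0" and rp: "\<forall>k\<le>L. r k > 0"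
    and r0: "r 0 = 1" and rL: "r L = 1"
  shows "(\<not>(\<exists>k. Suc k < L \<and> min (q (Suc k) * r k) (p (Suc (Suc k)) * r (Suc (Suc k))) \<le> r (Suc k))) \<longleftrightarrow>
    (r 1 < q 1 \<and> r (L-1) < p L \<and>
          (\<forall>l \<in> {2..L-1}. 1 / real (p l) < real (r l) / real (r (l-1)) \<and>
                            real (r l) / real (r (l-1)) < real (q l)))"
    (is "?A \<longleftrightarrow> ?B")
proof -
  have A: "?A \<longleftrightarrow> (\<forall>k. Suc k < L \<longrightarrow> r (Suc k) < q (Suc k) * r k \<and> r (Suc k) < p (Suc (Suc k)) * r (Suc (Suc k)))"
    by (auto simp: not_le)
  show ?thesis
  proof
    assume a: ?A
    have c: "r (Suc k) < q (Suc k) * r k \<and> r (Suc k) < p (Suc (Suc k)) * r (Suc (Suc k))" if "Suc k < L" for k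
      using a A that by blast
    have 1: "r 1 < q 1" using c[of 0] L r0 by simp
    have 2: "r (L-1) < p L" using c[of "L-2"] L rL by (simp add: Suc_diff_Suc numeral_2_eq_2)
    have 3: "1 / real (p l) < real (r l) / real (r (l-1)) \<and> real (r l) / real (r (l-1)) < real (q l)"
      if l: "l \<in> {2..L-1}" for l
    proof -
      have lp: "p l > 0" "r (l-1) > 0" using pq rp l by auto
      have e: "Suc (l-2) = l-1" "Suc (Suc (l-2)) = l" "Suc (l-1) = l" "Suc (l-2) < L" "Suc (l-1) < L"
        using l by auto
      have c1: "r (l-1) < p l * r l" using c[OF e(4)] unfolding e(1) e(3) by blast
      have c2: "r l < q l * r (l-1)" using c[OF e(5)] unfolding e(3) by blast
      show ?thesis using rat1[OF lp] rat2[OF lp(2)] c1 c2 by simp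
    qed
    show ?B using 1 2 3 by blast
  next
    assume b: ?B
    have "r (Suc k) < q (Suc k) * r k \<and> r (Suc k) < p (Suc (Suc k)) * r (Suc (Suc k))" if k: "Suc k < L" for k
    proof
      show "r (Suc k) < q (Suc k) * r k"
      proof (cases k)
        case 0 then show ?thesis using b r0 by simp
      next
        case (Suc k')
        then have l: "Suc k \<in> {2..L-1}" using k by auto
        have "r (Suc k - 1) > 0" using rp k by simp
        then show ?thesis using b l rat2 by fastforce
      qed
      show "r (Suc k) < p (Suc (Suc k)) * r (Suc (Suc k))"
      proof (cases "Suc (Suc k) = L")
        case True then show ?thesis using b rL by (metis diff_Suc_1 nat_mult_1_right)
      next
        case False
        then have l: "Suc (Suc k) \<in> {2..L-1}" using k by auto
        have lp: "p (Suc (Suc k)) > 0" "r (Suc (Suc k) - 1) > 0" using pq rp k by auto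
        show ?thesis using b l rat1[OF lp] by fastforce
      qed
    qed
    then show ?A using A by blast
  qed
qed



lemma converse:
  fixes m n L :: nat and p q r :: "nat \<Rightarrow> nat"
  assumes L: "L \<ge> 2" and pq: "\<forall>l\<in>{1..L}. p l > 0 \<and> q l > 0" and rp: "\<forall>l\<in>{1..<L}. r l > 0"
    and r0: "r 0 = 1" and rL: "r L = 1" and m: "m = (\<Prod>l\<in>{1..L}. q l)" and n: "n = (\<Prod>l\<in>{1..L}. p l)"
  shows "chainable_arch (arch_of L p q r) \<and>
       B_set (arch_of L p q r) \<subseteq> carrier_mat m n \<and>
       (\<exists>M \<in> B_set (arch_of L p q r). all_nonzero M) \<and>
       (\<not> redundant_arch (arch_of L p q r) \<longleftrightarrow>
          r 1 < q 1 \<and> r (L-1) < p L \<and>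
          (\<forall>l \<in> {2..L-1}. 1 / real (p l) < real (r l) / real (r (l-1)) \<and>
                            real (r l) / real (r (l-1)) < real (q l)))"
proof -
  define \<beta> where "\<beta> = arch_of L p q r"
  define P where "P k = (\<Prod>j\<in>{1..<Suc k}. p j)" for k
  define Q where "Q k = (\<Prod>j\<in>{Suc (Suc k)..L}. q j)" for k
  have len: "length \<beta> = L" unfolding \<beta>_def by (rule arch_len)
  have nth: "\<beta>!k = (P k, q (Suc k) * r k, p (Suc k) * r (Suc k), Q k)" if "k < L" for k
    unfolding \<beta>_def P_def Q_def using arch_nth[OF that] .
  have rpos: "r k > 0" if "k \<le> L" for k
    using rp r0 rL that by (cases "k = 0"; cases "k = L") auto
  have Ppos: "P k > 0" if "k < L" for k unfolding P_def using pq that by (intro prod_pos) auto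
  have Qpos: "Q k > 0" for k unfolding Q_def using pq by (intro prod_pos) auto
  have PS: "P (Suc k) = P k * p (Suc k)" for k unfolding P_def by (simp add: prod.atLeastLessThan_Suc)
  have QS: "Q k = q (Suc (Suc k)) * Q (Suc k)" if "Suc (Suc k) \<le> L" for k
    unfolding Q_def using that by (simp add: prod.atLeast_Suc_atMost)
  have pair: "chainable_pair (\<beta>!k) (\<beta>!Suc k) \<and> r_pair (\<beta>!k) (\<beta>!Suc k) = r (Suc k) \<and>
     cl (\<beta>!k) = rw (\<beta>!Suc k) \<and> pb (\<beta>!k) = q (Suc k) * r k \<and>
     pc (\<beta>!Suc k) = p (Suc (Suc k)) * r (Suc (Suc k))" if k: "Suc k < L" for k
  proof -
    have e1: "\<beta>!k = (P k, q (Suc k) * r k, p (Suc k) * r (Suc k), q (Suc (Suc k)) * Q (Suc k))"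
      using nth[of k] QS[of k] k by simp
    have e2: "\<beta>!Suc k = (P k * p (Suc k), q (Suc (Suc k)) * r (Suc k), p (Suc (Suc k)) * r (Suc (Suc k)), Q (Suc k))"
      using nth[OF k] PS[of k] by simp
    have "P k > 0" "p (Suc k) > 0" "q (Suc (Suc k)) > 0" using Ppos pq k by auto
    from pair_arith[OF this Qpos[of "Suc k"], of "q (Suc k)" "r k" "r (Suc k)" "p (Suc (Suc k))" "r (Suc (Suc k))"]
    show ?thesis unfolding e1 e2 rw_def cl_def by simp
  qed
  have ok: "pattern_ok (\<beta>!k)" if "k < L" for k
    using nth[OF that] Ppos[OF that] Qpos[of k] pq rpos[of k] rpos[of "Suc k"] that
    unfolding pattern_ok_def pa_def pb_def pc_def pd_def by auto
  have ch: "chainable_arch \<beta>"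
    unfolding chainable_arch_def is_arch_def
  proof (intro conjI allI impI ballI)
    fix \<pi> assume "\<pi> \<in> set \<beta>" then show "pattern_ok \<pi>" using ok len by (auto simp: in_set_conv_nth)
  next
    fix l assume "Suc l < length \<beta>"
    then show "pa (\<beta>!l) * pc (\<beta>!l) * pd (\<beta>!l) = pa (\<beta>!Suc l) * pb (\<beta>!Suc l) * pd (\<beta>!Suc l)"
      using pair[of l] len unfolding rw_def cl_def by simp
  next
    fix l assume "Suc l < length \<beta>"
    then show "chainable_pair (\<beta>!l) (\<beta>!Suc l)" using pair[of l] len by simp
  qed
  have L0: "L > 0" using L by simp
  have ne: "\<beta> \<noteq> []" using len L0 by auto
  have hd: "hd \<beta> = \<beta>!0" using ne by (simp add: hd_conv_nth)
  have last: "last \<beta> = \<beta>!(L-1)" using ne len by (simp add: last_conv_nth)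
  have rwhd: "rw (hd \<beta>) = m"
  proof -
    have "rw (hd \<beta>) = q 1 * Q 0" unfolding hd rw_def using nth[OF L0] r0 by (simp add: P_def pa_def pb_def pd_def)
    also have "\<dots> = m" unfolding m Q_def using L by (simp add: prod.atLeast_Suc_atMost)
    finally show ?thesis .
  qed
  have QL: "Q (L-1) = 1" unfolding Q_def using L0 by simp
  have PL: "P (L-1) * p L = n" unfolding P_def n using L0
    by (simp add: prod.atLeastLessThan_Suc[symmetric] atLeastLessThanSuc_atLeastAtMost)
  have clL: "cl (last \<beta>) = n" unfolding last cl_def using nth[of "L-1"] L0 rL QL PL
    by (simp add: pa_def pc_def pd_def)
  have pdL: "pd (last \<beta>) = 1" unfolding last using nth[of "L-1"] L0 QL by (simp add: pd_def)
  have pahd: "pa (hd \<beta>) = 1" unfolding hd using nth[OF L0] by (simp add: pa_def P_def)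
  have part2: "B_set \<beta> \<subseteq> carrier_mat m n"
  proof
    fix M assume "M \<in> B_set \<beta>"
    then obtain Xs where "M = mprod Xs" "length Xs = length \<beta>" "\<forall>l<length \<beta>. is_factor (\<beta>!l) (Xs!l)"
      unfolding B_set_def by blast
    then show "M \<in> carrier_mat m n" using prod_props[OF ch ne] rwhd clL by metis
  qed
  have part3: "\<exists>M \<in> B_set \<beta>. all_nonzero M"
  proof
    let ?M = "mprod (map S_pat \<beta>)"
    show "?M \<in> B_set \<beta>" unfolding B_set_def
      by (rule CollectI, rule exI[of _ "map S_pat \<beta>"]) (simp add: is_factor_S)
    have Mc: "?M \<in> carrier_mat m n" using prod_props[OF ch ne, of "map S_pat \<beta>"] is_factor_S rwhd clL by simp
    have pos: "\<forall>i<rw (hd \<beta>). \<forall>j<cl (last \<beta>). ?M $$ (i,j) \<ge> 0 \<and>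
     (i div (pb (hd \<beta>) * pd (hd \<beta>)) = j div (cl (last \<beta>) div pa (hd \<beta>)) \<longrightarrow> ?M $$ (i,j) > 0)"
      by (rule mprod_S_pos[OF ch ne pdL])
    have rw1: "rw (hd \<beta>) = pb (hd \<beta>) * pd (hd \<beta>)" unfolding rw_def pahd by simp
    show "all_nonzero ?M" unfolding all_nonzero_def
    proof (intro allI impI)
      fix i j assume i: "i < dim_row ?M" and j: "j < dim_col ?M"
      have i': "i < rw (hd \<beta>)" and j': "j < cl (last \<beta>)" using i j Mc rwhd clL by auto
      have "i div (pb (hd \<beta>) * pd (hd \<beta>)) = 0" using i' rw1 by simp
      moreover have "j div (cl (last \<beta>) div pa (hd \<beta>)) = 0" using j' pahd by simp
      ultimately show "?M $$ (i,j) \<noteq> 0" using pos i' j' by force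
    qed
  qed
  have red: "redundant_arch \<beta> \<longleftrightarrow> (\<exists>k. Suc k < L \<and> min (q (Suc k) * r k) (p (Suc (Suc k)) * r (Suc (Suc k))) \<le> r (Suc k))"
    unfolding redundant_arch_def redundant_pair_def using ch pair len by auto
  have part4: "(\<not> redundant_arch \<beta>) \<longleftrightarrow> r 1 < q 1 \<and> r (L-1) < p L \<and>
          (\<forall>l \<in> {2..L-1}. 1 / real (p l) < real (r l) / real (r (l-1)) \<and>
                            real (r l) / real (r (l-1)) < real (q l))"
    unfolding red using red_equiv[OF L pq _ r0 rL] rpos by blast
  show ?thesis using ch part2 part3 part4 unfolding \<beta>_def by blast
qed



lemma ar1: "y dvd (x::nat) \<Longrightarrow> x dvd b*y \<Longrightarrow> y > 0 \<Longrightarrow> b = (x div y) * (b*y div x)"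
proof -
  assume a: "y dvd x" "x dvd b*y" "y > 0"
  obtain e where e: "x = y*e" using a(1) by blast
  obtain f where f: "b*y = x*f" using a(2) by blast
  show ?thesis
  proof (cases "x = 0")
    case True then show ?thesis using f a(3) by simp
  next
    case False
    then have "e > 0" using e by simp
    have "b*y = y*(e*f)" using f e by (simp add: ac_simps)
    then have "b = e*f" using a(3) by simp
    moreover have "x div y = e" using e a(3) by simp
    moreover have "b*y div x = f" using f False by simp
    ultimately show ?thesis by simp
  qed
qed

lemma ar2: "a dvd a' \<Longrightarrow> a' dvd a*c \<Longrightarrow> (a::nat) > 0 \<Longrightarrow> c = (a' div a) * (a*c div a')"
  using ar1[of a a' c] by (simp add: mult.commute)

lemma ar3: "(x::nat) dvd y \<Longrightarrow> y > 0 \<Longrightarrow> y div x > 0"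
  by (metis dvd_div_eq_0_iff gr0I not_less0)

lemma forward:
  fixes m n L :: nat and \<beta> :: "pattern list"
  assumes mn: "m \<ge> 2" "n \<ge> 2" and L: "L \<ge> 2"
    and len: "length \<beta> = L" and ch: "chainable_arch \<beta>" and Bs: "B_set \<beta> \<subseteq> carrier_mat m n"
    and ex: "\<exists>M \<in> B_set \<beta>. all_nonzero M"
  shows "\<exists>p q r :: nat \<Rightarrow> nat.
         (\<forall>l \<in> {1..L}. p l > 0 \<and> q l > 0) \<and> (\<forall>l \<in> {1..<L}. r l > 0) \<and>
         r 0 = 1 \<and> r L = 1 \<and>
         m = (\<Prod>l\<in>{1..L}. q l) \<and> n = (\<Prod>l\<in>{1..L}. p l) \<and>
         (\<forall>l \<in> {1..L}.
            pa (\<beta>!(l-1)) = (\<Prod>j\<in>{1..<l}. p j) \<and>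
            pd (\<beta>!(l-1)) = (\<Prod>j\<in>{l+1..L}. q j) \<and>
            pb (\<beta>!(l-1)) = q l * r (l-1) \<and>
            pc (\<beta>!(l-1)) = p l * r l)"
proof -
  define A where "A k = pa (\<beta>!k)" for k
  define B where "B k = pb (\<beta>!k)" for k
  define C where "C k = pc (\<beta>!k)" for k
  define D where "D k = pd (\<beta>!k)" for k
  have L0: "L > 0" using L by simp
  have ne: "\<beta> \<noteq> []" using len L0 by auto
  have hd: "hd \<beta> = \<beta>!0" using ne by (simp add: hd_conv_nth)
  have last: "last \<beta> = \<beta>!(L-1)" using ne len by (simp add: last_conv_nth)
  have pos: "A k > 0 \<and> B k > 0 \<and> C k > 0 \<and> D k > 0" if "k < L" for k
    using pos_of_arch[OF ch, of k] that len unfolding A_def B_def C_def D_def by simp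
  have cp: "A (Suc k) dvd A k * C k \<and> D k dvd B (Suc k) * D (Suc k) \<and>
     A k * C k div A (Suc k) = B (Suc k) * D (Suc k) div D k \<and> A k dvd A (Suc k) \<and> D (Suc k) dvd D k"
    if "Suc k < L" for k
    using ch that len unfolding chainable_arch_def chainable_pair_def A_def B_def C_def D_def by simp
  obtain M where M: "M \<in> B_set \<beta>" "all_nonzero M" using ex by blast
  then obtain Xs where Xs: "M = mprod Xs" "length Xs = length \<beta>" "\<forall>l<length \<beta>. is_factor (\<beta>!l) (Xs!l)"
    unfolding B_set_def by blast
  note PP = prod_props[OF ch ne Xs(2,3)]
  have Mc: "M \<in> carrier_mat m n" using M Bs by blast
  have mrw: "m = A 0 * B 0 * D 0" and ncl: "n = A (L-1) * C (L-1) * D (L-1)"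
    using PP Mc Xs(1) hd last unfolding rw_def cl_def A_def B_def C_def D_def by auto
  have mrows: "dim_row M = m" "dim_col M = n" using Mc by auto
  have nz: "M $$ (i,j) \<noteq> 0" if "i < m" "j < n" for i j using M(2) mrows that unfolding all_nonzero_def by auto
  have supp: "i mod D (L-1) = j mod D (L-1) \<and> (\<forall>k. k dvd A 0 \<longrightarrow> i div (m div k) = j div (n div k))"
    if "i < m" "j < n" for i j
    using PP nz[OF that] that Xs(1) mrw ncl hd last unfolding A_def B_def C_def D_def rw_def cl_def by auto
  have A0: "A 0 = 1"
  proof (rule ccontr)
    assume "A 0 \<noteq> 1"
    then have a2: "A 0 \<ge> 2" using pos[OF L0] by simp
    have "A 0 dvd A (L-1)" using chain_dvd[OF ch, of 0 "L-1"] len L0 unfolding A_def by simp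
    then have dv: "A 0 dvd n" unfolding ncl by simp
    then obtain K where K: "n = A 0 * K" by blast
    have K0: "K > 0" using K mn by (cases K) auto
    have nK: "n div A 0 = K" using K a2 by simp
    have Kn: "K < n" using K a2 K0 by simp
    have "0 div (m div A 0) = K div (n div A 0)" using supp[of 0 K] Kn mn by auto
    then show False using nK K0 by simp
  qed
  have DL: "D (L-1) = 1"
  proof (rule ccontr)
    assume "D (L-1) \<noteq> 1"
    then have "D (L-1) \<ge> 2" using pos[of "L-1"] L0 by simp
    then show False using supp[of 0 1] mn by simp
  qed
  define p where "p l = (if l < L then A l div A (l-1) else C (L-1))" for l
  define q where "q l = (if l = 1 then B 0 else D (l-2) div D (l-1))" for l
  define r where "r l = (if 1 \<le> l \<and> l < L then A (l-1) * C (l-1) div A l else 1)" for l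
  have ppos: "p l > 0" if "l \<in> {1..L}" for l
  proof (cases "l < L")
    case True
    then have "Suc (l-1) < L" "Suc (l-1) = l" using that by auto
    then have "A (l-1) dvd A l" using cp[of "l-1"] by metis
    then show ?thesis using True pos[of l] unfolding p_def by (simp add: ar3)
  next
    case False then show ?thesis using pos[of "L-1"] L0 unfolding p_def by simp
  qed
  have qpos: "q l > 0" if "l \<in> {1..L}" for l
  proof (cases "l = 1")
    case True then show ?thesis using pos[of 0] L0 unfolding q_def by simp
  next
    case False
    then have e: "Suc (l-2) < L" "Suc (l-2) = l-1" using that by auto
    then have "D (l-1) dvd D (l-2)" using cp[of "l-2"] by metis
    then show ?thesis using False pos[of "l-2"] e unfolding q_def by (simp add: ar3)
  qed
  have rpos: "r l > 0" if "l \<in> {1..<L}" for l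
  proof -
    have e: "Suc (l-1) < L" "Suc (l-1) = l" using that by auto
    then have "A l dvd A (l-1) * C (l-1)" using cp[of "l-1"] by metis
    moreover have "A (l-1) * C (l-1) > 0" using pos[of "l-1"] e by simp
    ultimately show ?thesis using that unfolding r_def by (simp add: ar3)
  qed
  have r0: "r 0 = 1" and rL: "r L = 1" unfolding r_def by auto
  have Aprod: "A k = (\<Prod>j\<in>{1..<Suc k}. p j)" if "k < L" for k
    using that
  proof (induction k)
    case 0 then show ?case using A0 by simp
  next
    case (Suc k)
    have "(\<Prod>j\<in>{1..<Suc (Suc k)}. p j) = (\<Prod>j\<in>{1..<Suc k}. p j) * p (Suc k)"
      by (simp add: prod.atLeastLessThan_Suc)
    also have "\<dots> = A k * (A (Suc k) div A k)" using Suc unfolding p_def by simp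
    also have "\<dots> = A (Suc k)" using cp[OF Suc.prems] by simp
    finally show ?case by simp
  qed
  have Dprod: "D k = (\<Prod>j\<in>{Suc (Suc k)..L}. q j)" if "k \<le> L-1" for k
    using that
  proof (induction k rule: inc_induct)
    case base then show ?case using DL L0 by simp
  next
    case (step k)
    have kk: "Suc k < L" using step by simp
    have "(\<Prod>j\<in>{Suc (Suc k)..L}. q j) = q (Suc (Suc k)) * (\<Prod>j\<in>{Suc (Suc (Suc k))..L}. q j)"
      using kk by (simp add: prod.atLeast_Suc_atMost)
    also have "\<dots> = (D k div D (Suc k)) * D (Suc k)" using step unfolding q_def by simp
    also have "\<dots> = D k" using cp[OF kk] by simp
    finally show ?case by simp
  qed
  have mq: "m = (\<Prod>l\<in>{1..L}. q l)"
  proof -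
    have "(\<Prod>l\<in>{1..L}. q l) = q 1 * (\<Prod>l\<in>{2..L}. q l)" using L0
      by (simp add: prod.atLeast_Suc_atMost numeral_2_eq_2)
    also have "\<dots> = B 0 * D 0" using Dprod[of 0] unfolding q_def by (simp add: numeral_2_eq_2)
    finally show ?thesis using mrw A0 by simp
  qed
  have np: "n = (\<Prod>l\<in>{1..L}. p l)"
  proof -
    have "(\<Prod>l\<in>{1..L}. p l) = (\<Prod>l\<in>{1..<L}. p l) * p L" using L0
      by (simp add: prod.atLeastLessThan_Suc[symmetric] atLeastLessThanSuc_atLeastAtMost)
    also have "\<dots> = A (L-1) * C (L-1)" using Aprod[of "L-1"] L0 unfolding p_def by simp
    finally show ?thesis using ncl DL by simp
  qed
  have main: "pa (\<beta>!(l-1)) = (\<Prod>j\<in>{1..<l}. p j) \<and>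
            pd (\<beta>!(l-1)) = (\<Prod>j\<in>{l+1..L}. q j) \<and>
            pb (\<beta>!(l-1)) = q l * r (l-1) \<and>
            pc (\<beta>!(l-1)) = p l * r l" if l: "l \<in> {1..L}" for l
  proof -
    obtain k where k: "l = Suc k" "k < L" using l by (cases l) auto
    have 1: "pa (\<beta>!(l-1)) = (\<Prod>j\<in>{1..<l}. p j)" using Aprod[OF k(2)] k unfolding A_def by simp
    have 2: "pd (\<beta>!(l-1)) = (\<Prod>j\<in>{l+1..L}. q j)" using Dprod[of k] k unfolding D_def by simp
    have 3: "B k = q l * r (l-1)"
    proof (cases k)
      case 0 then show ?thesis using k unfolding q_def r_def by simp
    next
      case (Suc k')
      have kk: "Suc k' < L" using k Suc by simp
      have ql: "q l = D k' div D k" using k Suc unfolding q_def by simp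
      have rl: "r (l-1) = B k * D k div D k'" using k Suc cp[OF kk] unfolding r_def by simp
      show ?thesis unfolding ql rl using ar1[of "D k" "D k'" "B k"] cp[OF kk] pos[OF k(2)] Suc by simp
    qed
    have 4: "C k = p l * r l"
    proof (cases "Suc k < L")
      case True
      have pl: "p l = A (Suc k) div A k" using k True unfolding p_def by simp
      have rl: "r l = A k * C k div A (Suc k)" using k True unfolding r_def by simp
      show ?thesis unfolding pl rl using ar2[of "A k" "A (Suc k)" "C k"] cp[OF True] pos[OF k(2)] by simp
    next
      case False
      then have "k = L-1" "l = L" using k by auto
      then show ?thesis unfolding p_def r_def by simp
    qed
    show ?thesis using 1 2 3 4 k unfolding B_def C_def by simp
  qed
  show ?thesis
    apply (rule exI[of _ p], rule exI[of _ q], rule exI[of _ r])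
    using ppos qpos rpos r0 rL mq np main by blast
qed

theorem lemma4p16:
  fixes m n L :: nat
  assumes "m \<ge> 2" and "n \<ge> 2" and "L \<ge> 2"
  shows
   "(\<forall>\<beta>. length \<beta> = L \<and> chainable_arch \<beta> \<and> B_set \<beta> \<subseteq> carrier_mat m n \<and>
         (\<exists>M \<in> B_set \<beta>. all_nonzero M) \<longrightarrow>
      (\<exists>p q r :: nat \<Rightarrow> nat.
         (\<forall>l \<in> {1..L}. p l > 0 \<and> q l > 0) \<and> (\<forall>l \<in> {1..<L}. r l > 0) \<and>
         r 0 = 1 \<and> r L = 1 \<and>
         m = (\<Prod>l\<in>{1..L}. q l) \<and> n = (\<Prod>l\<in>{1..L}. p l) \<and>
         (\<forall>l \<in> {1..L}.
            pa (\<beta>!(l-1)) = (\<Prod>j\<in>{1..<l}. p j) \<and>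
            pd (\<beta>!(l-1)) = (\<Prod>j\<in>{l+1..L}. q j) \<and>
            pb (\<beta>!(l-1)) = q l * r (l-1) \<and>
            pc (\<beta>!(l-1)) = p l * r l)))
    \<and>
    (\<forall>p q r :: nat \<Rightarrow> nat.
       (\<forall>l \<in> {1..L}. p l > 0 \<and> q l > 0) \<and> (\<forall>l \<in> {1..<L}. r l > 0) \<and>
       r 0 = 1 \<and> r L = 1 \<and>
       m = (\<Prod>l\<in>{1..L}. q l) \<and> n = (\<Prod>l\<in>{1..L}. p l) \<longrightarrow>
       chainable_arch (arch_of L p q r) \<and>
       B_set (arch_of L p q r) \<subseteq> carrier_mat m n \<and>
       (\<exists>M \<in> B_set (arch_of L p q r). all_nonzero M) \<and>
       (\<not> redundant_arch (arch_of L p q r) \<longleftrightarrow>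
          r 1 < q 1 \<and> r (L-1) < p L \<and>
          (\<forall>l \<in> {2..L-1}. 1 / real (p l) < real (r l) / real (r (l-1)) \<and>
                            real (r l) / real (r (l-1)) < real (q l))))"
    apply (rule conjI)
   apply (intro allI impI)
   apply (elim conjE)
   apply (rule forward[OF assms]; assumption)
  apply (intro allI impI)
  apply (elim conjE)
  apply (rule converse[OF assms(3)]; assumption)
  done

end
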